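(* Let $U$ be a scale aversion regular utility function and $\alpha$ the associated utility-based acceptability index. Then for all $X,Y\in L^\infty$: (1) if $X\le Y$ a.s. then $\alpha(X)\le\alpha(Y)$; (2) $X\ge0$ a.s. if and only if $\alpha(X)=\infty$; (3) for every $\lambda\in[0,1]$, $\alpha(\lambda X+(1-\lambda)Y)\ge\alpha(X)\wedge\alpha(Y)$; (4) if $X$ and $Y$ have the same law then $\alpha(X)=\alpha(Y)$; (5) if $\mathbb E[X]<0$ then $\alpha(X)=0$, and if $\mathbb E[X]>0$ then $\alpha(X)>0$; (6) (Fatou property) if $x\in[0,\infty]$, $X_n\in L^\infty$ with $\alpha(X_n)\ge x$ for all $n\in\mathbb N$ and $X_n\to X$ almost surely, then $\alpha(X)\ge x$; (7) if $\mathbb E[V(X)]\le\mathbb E[V(Y)]$ for every increasing concave $V\colon\mathbb R\to\mathbb R$, then $\alpha(X)\le\alpha(Y)$; (8) (inverse positive homogeneity) for every $\lambda>0$, $\alpha(\lambda X)=\lambda^{-1}\alpha(X)$ (with $\lambda^{-1}\cdot\infty=\infty$).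
   Context: Let $(\Omega,\mathcal F,\mathbb P)$ be a probability space, $L^0$ the set of all real-valued random variables and $L^\infty$ the set of essentially bounded ones. A utility function is a function $U\in C^2(\mathbb R)$ which is concave, strictly increasing and bounded from above. For $\gamma>0$ define $\mu_\gamma\colon L^0\to(-\infty,+\infty]$ by $\mu_\gamma(X):=-\tfrac1\gamma U^{-1}(\mathbb E[U(\gamma X)])$, with the convention $U^{-1}(-\infty):=-\infty$. $U$ is called scale aversion regular if $\mu_{\gamma_1}(X)\le\mu_{\gamma_2}(X)$ for all $X\in L^\infty$ and all $0<\gamma_1\le\gamma_2<\infty$. For scale aversion regular $U$, the utility-based acceptability index $\alpha\colon L^0\to[0,+\infty]$ is $\alpha(X):=\sup\{\gamma>0:\mu_\gamma(X)\le0\}$, with $\sup\emptyset:=0$. *)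

theory Defs
  imports "HOL-Probability.Probability"
begin

definition utility_function :: "(real \<Rightarrow> real) \<Rightarrow> bool" where
  "utility_function U \<longleftrightarrow>
     (\<exists>U' U''. (\<forall>x. (U has_real_derivative U' x) (at x)) \<and>
               (\<forall>x. (U' has_real_derivative U'' x) (at x)) \<and>
               continuous_on UNIV U'') \<and>
     concave_on UNIV U \<and> strict_mono U \<and> bdd_above (range U)"

definition Linf :: "'a measure \<Rightarrow> ('a \<Rightarrow> real) set" where
  "Linf M = {X. X \<in> borel_measurable M \<and> (\<exists>C. AE \<omega> in M. \<bar>X \<omega>\<bar> \<le> C)}"

text \<open>E[U(gamma X)] as an extended real. Since U is bounded above, for measurable X
  the expectation is either finite (integrable case) or equal to minus infinity.\<close>
definition exp_util :: "'a measure \<Rightarrow> (real \<Rightarrow> real) \<Rightarrow> real \<Rightarrow> ('a \<Rightarrow> real) \<Rightarrow> ereal" where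
  "exp_util M U \<gamma> X =
     (if integrable M (\<lambda>\<omega>. U (\<gamma> * X \<omega>)) then ereal (\<integral>\<omega>. U (\<gamma> * X \<omega>) \<partial>M) else -\<infinity>)"

definition Uinv :: "(real \<Rightarrow> real) \<Rightarrow> ereal \<Rightarrow> ereal" where
  "Uinv U t = (if t = -\<infinity> then -\<infinity> else ereal (the_inv U (real_of_ereal t)))"

definition mu :: "'a measure \<Rightarrow> (real \<Rightarrow> real) \<Rightarrow> real \<Rightarrow> ('a \<Rightarrow> real) \<Rightarrow> ereal" where
  "mu M U \<gamma> X = - (ereal (1 / \<gamma>) * Uinv U (exp_util M U \<gamma> X))"

definition scale_aversion_regular :: "'a measure \<Rightarrow> (real \<Rightarrow> real) \<Rightarrow> bool" where
  "scale_aversion_regular M U \<longleftrightarrow>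
     (\<forall>X \<in> Linf M. \<forall>\<gamma>1 \<gamma>2. 0 < \<gamma>1 \<and> \<gamma>1 \<le> \<gamma>2 \<longrightarrow> mu M U \<gamma>1 X \<le> mu M U \<gamma>2 X)"

definition acc_index :: "'a measure \<Rightarrow> (real \<Rightarrow> real) \<Rightarrow> ('a \<Rightarrow> real) \<Rightarrow> ereal" where
  "acc_index M U X =
     (let S = {ereal \<gamma> | \<gamma>. \<gamma> > 0 \<and> mu M U \<gamma> X \<le> 0} in if S = {} then 0 else Sup S)"

end

theory Submission
  imports Defs
begin


lemma concU:
  assumes "concave_on UNIV U" "0 \<le> t" "t \<le> 1"
  shows "(1 - t) * U x + t * U y \<le> U ((1 - t) * x + t * y)"
  using concave_onD[OF assms(1) assms(2,3), of x y] by simp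

lemma uf_cont: "utility_function U \<Longrightarrow> continuous_on UNIV U"
  unfolding utility_function_def
  by (metis DERIV_isCont continuous_at_imp_continuous_on)

lemma uf_meas: "utility_function U \<Longrightarrow> U \<in> borel_measurable borel"
  by (intro borel_measurable_continuous_onI uf_cont)

lemma uf_unbdd:
  assumes "utility_function U"
  shows "\<exists>t. U t < K"
proof -
  have c: "concave_on UNIV U" and sm: "strict_mono U" using assms utility_function_def by auto
  define d where "d = U 0 - U (-1)"
  have dpos: "d > 0" using sm unfolding d_def strict_mono_def by auto
  have key: "U t \<le> U 0 + d * t" if "t \<le> -1" for t
  proof -
    define u where "u = 1 / (- t)"
    have u: "0 \<le> u" "u \<le> 1" using that by (auto simp: u_def field_simps)
    have "(1 - u) * U 0 + u * U t \<le> U ((1 - u) * 0 + u * t)" by (rule concU[OF c u])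
    moreover have "(1 - u) * 0 + u * t = -1" using that by (simp add: u_def field_simps)
    ultimately have "(1 - u) * U 0 + u * U t \<le> U (-1)" by simp
    hence "u * (U 0 - U t) \<ge> d" unfolding d_def by (simp add: algebra_simps)
    hence "(-t) * (u * (U 0 - U t)) \<ge> (-t) * d" using that by (intro mult_left_mono) auto
    moreover have "(-t) * (u * (U 0 - U t)) = U 0 - U t" using that by (simp add: u_def field_simps)
    ultimately show ?thesis by (simp add: algebra_simps)
  qed
  define t where "t = min (-1) ((K - U 0 - 1) / d)"
  have "U t \<le> U 0 + d * t" using key by (simp add: t_def)
  also have "d * t \<le> d * ((K - U 0 - 1) / d)" using dpos by (intro mult_left_mono) (auto simp: t_def)
  finally have "U t \<le> K - 1" using dpos by simp
  thus ?thesis by (intro exI[of _ t]) simp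
qed



lemma Linf_bound:
  assumes "X \<in> Linf M" obtains C where "C > 0" "AE \<omega> in M. \<bar>X \<omega>\<bar> \<le> C"
proof -
  obtain C where "AE \<omega> in M. \<bar>X \<omega>\<bar> \<le> C" using assms unfolding Linf_def by auto
  hence "AE \<omega> in M. \<bar>X \<omega>\<bar> \<le> max C 1" by eventually_elim auto
  thus ?thesis using that[of "max C 1"] by auto
qed

lemma Linf_meas: "X \<in> Linf M \<Longrightarrow> X \<in> borel_measurable M"
  unfolding Linf_def by auto

lemma U_bounds:
  assumes "utility_function U" "X \<in> Linf M"
  obtains C where "C > 0" "AE \<omega> in M. U (-(\<bar>g\<bar>*C)) \<le> U (g * X \<omega>) \<and> U (g * X \<omega>) \<le> U (\<bar>g\<bar>*C)"
proof -
  have sm: "strict_mono U" using assms utility_function_def by auto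
  hence mo: "mono U" by (rule strict_mono_mono)
  obtain C where C: "C > 0" "AE \<omega> in M. \<bar>X \<omega>\<bar> \<le> C" using Linf_bound[OF assms(2)] by blast
  have "AE \<omega> in M. U (-(\<bar>g\<bar>*C)) \<le> U (g * X \<omega>) \<and> U (g * X \<omega>) \<le> U (\<bar>g\<bar>*C)"
    using C(2)
  proof eventually_elim
    case (elim \<omega>)
    have "\<bar>g * X \<omega>\<bar> \<le> \<bar>g\<bar> * C" using elim by (simp add: abs_mult mult_left_mono)
    hence "-(\<bar>g\<bar>*C) \<le> g * X \<omega>" "g * X \<omega> \<le> \<bar>g\<bar>*C" by linarith+
    thus ?case using mo by (auto simp: mono_def)
  qed
  thus ?thesis using that C(1) by blast
qed

lemma G_integrable:
  assumes "prob_space M" "utility_function U" "X \<in> Linf M"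
  shows "integrable M (\<lambda>\<omega>. U (g * X \<omega>))"
proof -
  interpret prob_space M by fact
  obtain C where C: "AE \<omega> in M. U (-(\<bar>g\<bar>*C)) \<le> U (g * X \<omega>) \<and> U (g * X \<omega>) \<le> U (\<bar>g\<bar>*C)"
    using U_bounds[OF assms(2,3)] by blast
  show ?thesis
  proof (rule integrable_const_bound[where B="\<bar>U (-(\<bar>g\<bar>*C))\<bar> + \<bar>U (\<bar>g\<bar>*C)\<bar>"])
    show "AE x in M. norm (U (g * X x)) \<le> \<bar>U (- (\<bar>g\<bar> * C))\<bar> + \<bar>U (\<bar>g\<bar> * C)\<bar>"
      using C by eventually_elim auto
    show "(\<lambda>x. U (g * X x)) \<in> borel_measurable M"
      using uf_meas[OF assms(2)] Linf_meas[OF assms(3)] by measurable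
  qed
qed

lemma G_range:
  assumes "prob_space M" "utility_function U" "X \<in> Linf M"
  shows "\<exists>t. U t = (\<integral>\<omega>. U (g * X \<omega>) \<partial>M)"
proof -
  interpret prob_space M by fact
  obtain C where C: "C > 0" "AE \<omega> in M. U (-(\<bar>g\<bar>*C)) \<le> U (g * X \<omega>) \<and> U (g * X \<omega>) \<le> U (\<bar>g\<bar>*C)"
    using U_bounds[OF assms(2,3)] by blast
  have int: "integrable M (\<lambda>\<omega>. U (g * X \<omega>))" by (rule G_integrable[OF assms])
  have "(\<integral>\<omega>. U (-(\<bar>g\<bar>*C)) \<partial>M) \<le> (\<integral>\<omega>. U (g * X \<omega>) \<partial>M)"
    by (rule integral_mono_AE) (use int C in auto)
  hence l: "U (-(\<bar>g\<bar>*C)) \<le> (\<integral>\<omega>. U (g * X \<omega>) \<partial>M)" by (simp add: prob_space)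
  have "(\<integral>\<omega>. U (g * X \<omega>) \<partial>M) \<le> (\<integral>\<omega>. U (\<bar>g\<bar>*C) \<partial>M)"
    by (rule integral_mono_AE) (use int C in auto)
  hence r: "(\<integral>\<omega>. U (g * X \<omega>) \<partial>M) \<le> U (\<bar>g\<bar>*C)" by (simp add: prob_space)
  have "continuous_on {-(\<bar>g\<bar>*C)..\<bar>g\<bar>*C} U"
    using uf_cont[OF assms(2)] continuous_on_subset by blast
  from IVT'[OF l r _ this] C(1) show ?thesis by auto
qed

lemma mu_iff:
  assumes "prob_space M" "utility_function U" "X \<in> Linf M" "g > 0"
  shows "mu M U g X \<le> 0 \<longleftrightarrow> U 0 \<le> (\<integral>\<omega>. U (g * X \<omega>) \<partial>M)"
proof -
  have sm: "strict_mono U" using assms utility_function_def by auto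
  obtain t where t: "U t = (\<integral>\<omega>. U (g * X \<omega>) \<partial>M)" using G_range[OF assms(1-3)] by blast
  have ti: "the_inv U (U t) = t" using the_inv_f_f[OF strict_mono_imp_inj_on[OF sm]] by simp
  have "mu M U g X = ereal (- (t / g))"
    unfolding mu_def exp_util_def Uinv_def using G_integrable[OF assms(1-3)] t ti
    by (simp flip: t)
  hence "mu M U g X \<le> 0 \<longleftrightarrow> 0 \<le> t" using assms(4) by (simp add: field_simps)
  also have "\<dots> \<longleftrightarrow> U 0 \<le> U t" using sm by (simp add: strict_mono_less_eq)
  finally show ?thesis using t by simp
qed



definition AI :: "real set \<Rightarrow> ereal" where
  "AI S = (if S = {} then 0 else Sup (ereal ` S))"

definition SS :: "'a measure \<Rightarrow> (real \<Rightarrow> real) \<Rightarrow> ('a \<Rightarrow> real) \<Rightarrow> real set" where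
  "SS M U X = {g. g > 0 \<and> U 0 \<le> (\<integral>\<omega>. U (g * X \<omega>) \<partial>M)}"

lemma acc_eq:
  assumes "prob_space M" "utility_function U" "X \<in> Linf M"
  shows "acc_index M U X = AI (SS M U X)"
proof -
  have "{ereal \<gamma> | \<gamma>. \<gamma> > 0 \<and> mu M U \<gamma> X \<le> 0} = ereal ` SS M U X"
    using mu_iff[OF assms] unfolding SS_def by auto
  thus ?thesis unfolding acc_index_def AI_def Let_def by simp
qed

lemma AI_ge: "g \<in> S \<Longrightarrow> ereal g \<le> AI S"
  unfolding AI_def by (auto intro: Sup_upper)

lemma AI_nonneg: "\<forall>g\<in>S. g > 0 \<Longrightarrow> 0 \<le> AI S"
proof (cases "S = {}")
  case False
  then obtain g where "g \<in> S" by auto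
  moreover assume "\<forall>g\<in>S. g > 0"
  ultimately have "0 < g" "ereal g \<le> AI S" using AI_ge[of g S] by auto
  thus ?thesis by (metis dual_order.trans ereal_less_eq(5) less_imp_le zero_ereal_def)
qed (simp add: AI_def)

lemma AI_mem:
  assumes dc: "\<And>g g'. 0 < g \<Longrightarrow> g \<le> g' \<Longrightarrow> g' \<in> S \<Longrightarrow> g \<in> S"
    and "0 < g" "ereal g < AI S"
  shows "g \<in> S"
proof -
  have "S \<noteq> {}" using assms(2,3) by (auto simp: AI_def)
  hence "ereal g < Sup (ereal ` S)" using assms(3) by (simp add: AI_def)
  then obtain g' where "g' \<in> S" "ereal g < ereal g'" by (auto simp: less_Sup_iff)
  hence "g \<le> g'" by simp
  thus ?thesis using dc[OF assms(2)] \<open>g' \<in> S\<close> by blast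
qed

lemma AI_le:
  assumes "\<And>g. 0 < g \<Longrightarrow> ereal g < a \<Longrightarrow> ereal g \<le> b" "0 \<le> b"
  shows "a \<le> b"
proof (rule ccontr)
  assume "\<not> a \<le> b"
  hence "b < a" by simp
  then obtain z where z: "b < ereal z" "ereal z < a" using ereal_dense2 by blast
  have "ereal 0 < ereal z" using z(1) assms(2) by (metis le_less_trans zero_ereal_def)
  hence "0 < z" by simp
  with assms(1)[OF this z(2)] z(1) show False by simp
qed

lemma SS_pos: "\<forall>g\<in>SS M U X. g > 0" unfolding SS_def by auto

lemma SS_dc:
  assumes "prob_space M" "utility_function U" "scale_aversion_regular M U" "X \<in> Linf M"
    "0 < g" "g \<le> g'" "g' \<in> SS M U X"
  shows "g \<in> SS M U X"
proof -
  have "g' > 0" "U 0 \<le> (\<integral>\<omega>. U (g' * X \<omega>) \<partial>M)" using assms(7) by (auto simp: SS_def)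
  hence "mu M U g' X \<le> 0" using mu_iff[OF assms(1,2,4)] by simp
  moreover have "mu M U g X \<le> mu M U g' X"
    using assms(3,4,5,6) unfolding scale_aversion_regular_def by blast
  ultimately have "mu M U g X \<le> 0" by simp
  thus ?thesis using mu_iff[OF assms(1,2,4,5)] assms(5) by (simp add: SS_def)
qed

lemma SS_mem:
  assumes "prob_space M" "utility_function U" "scale_aversion_regular M U" "X \<in> Linf M"
    "0 < g" "ereal g < acc_index M U X"
  shows "U 0 \<le> (\<integral>\<omega>. U (g * X \<omega>) \<partial>M)"
proof -
  have "g \<in> SS M U X"
    using AI_mem[OF SS_dc[OF assms(1-4)] assms(5)] assms(6) acc_eq[OF assms(1,2,4)] by auto
  thus ?thesis by (simp add: SS_def)
qed

lemma acc_ge: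
  assumes "prob_space M" "utility_function U" "X \<in> Linf M"
    "0 < g" "U 0 \<le> (\<integral>\<omega>. U (g * X \<omega>) \<partial>M)"
  shows "ereal g \<le> acc_index M U X"
  using AI_ge[of g "SS M U X"] assms by (simp add: acc_eq SS_def)

lemma acc_nonneg:
  assumes "prob_space M" "utility_function U" "X \<in> Linf M"
  shows "0 \<le> acc_index M U X"
  using AI_nonneg[OF SS_pos] acc_eq[OF assms] by simp

lemma acc_le:
  assumes "prob_space M" "utility_function U" "scale_aversion_regular M U" "X \<in> Linf M" "Y \<in> Linf M"
    and "\<And>g. 0 < g \<Longrightarrow> ereal g < a \<Longrightarrow> U 0 \<le> (\<integral>\<omega>. U (g * Y \<omega>) \<partial>M)"
  shows "a \<le> acc_index M U Y"
proof (rule AI_le)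
  fix g :: real assume "0 < g" "ereal g < a"
  thus "ereal g \<le> acc_index M U Y" using acc_ge[OF assms(1,2,5)] assms(6) by blast
qed (rule acc_nonneg[OF assms(1,2,5)])



lemma uf_isCont: "utility_function U \<Longrightarrow> isCont U x"
  unfolding utility_function_def by (metis DERIV_isCont)

lemma Linf_lin:
  assumes "X \<in> Linf M" "Y \<in> Linf M"
  shows "(\<lambda>\<omega>. a * X \<omega> + b * Y \<omega>) \<in> Linf M"
proof -
  obtain C1 where C1: "AE \<omega> in M. \<bar>X \<omega>\<bar> \<le> C1" using Linf_bound[OF assms(1)] by blast
  obtain C2 where C2: "AE \<omega> in M. \<bar>Y \<omega>\<bar> \<le> C2" using Linf_bound[OF assms(2)] by blast
  have "AE \<omega> in M. \<bar>a * X \<omega> + b * Y \<omega>\<bar> \<le> \<bar>a\<bar> * C1 + \<bar>b\<bar> * C2"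
    using C1 C2
  proof eventually_elim
    case (elim \<omega>)
    have "\<bar>a * X \<omega> + b * Y \<omega>\<bar> \<le> \<bar>a\<bar> * \<bar>X \<omega>\<bar> + \<bar>b\<bar> * \<bar>Y \<omega>\<bar>"
      by (metis abs_mult abs_triangle_ineq)
    also have "\<dots> \<le> \<bar>a\<bar> * C1 + \<bar>b\<bar> * C2"
      using elim by (intro add_mono mult_left_mono) auto
    finally show ?case .
  qed
  moreover have "(\<lambda>\<omega>. a * X \<omega> + b * Y \<omega>) \<in> borel_measurable M"
    using Linf_meas[OF assms(1)] Linf_meas[OF assms(2)] by measurable
  ultimately show ?thesis unfolding Linf_def by blast
qed

lemma Linf_scale: "X \<in> Linf M \<Longrightarrow> (\<lambda>\<omega>. c * X \<omega>) \<in> Linf M"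
  using Linf_lin[of X M X c 0] by simp

context
  fixes M :: "'a measure" and U :: "real \<Rightarrow> real"
  assumes P: "prob_space M" and UF: "utility_function U" and SAR: "scale_aversion_regular M U"
begin

interpretation prob_space M by (rule P)

lemma Umono: "mono U" using UF strict_mono_mono unfolding utility_function_def by blast
lemma Uconc: "concave_on UNIV U" using UF unfolding utility_function_def by blast

lemma part1:
  assumes X: "X \<in> Linf M" and Y: "Y \<in> Linf M" and le: "AE \<omega> in M. X \<omega> \<le> Y \<omega>"
  shows "acc_index M U X \<le> acc_index M U Y"
proof (rule acc_le[OF P UF SAR X Y])
  fix g :: real assume g: "0 < g" "ereal g < acc_index M U X"
  have "U 0 \<le> (\<integral>\<omega>. U (g * X \<omega>) \<partial>M)" by (rule SS_mem[OF P UF SAR X g])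
  also have "\<dots> \<le> (\<integral>\<omega>. U (g * Y \<omega>) \<partial>M)"
  proof (rule integral_mono_AE[OF G_integrable[OF P UF X] G_integrable[OF P UF Y]])
    show "AE \<omega> in M. U (g * X \<omega>) \<le> U (g * Y \<omega>)" using le
    proof eventually_elim
      case (elim \<omega>) thus ?case using g Umono by (auto simp: mono_def)
    qed
  qed
  finally show "U 0 \<le> (\<integral>\<omega>. U (g * Y \<omega>) \<partial>M)" .
qed

lemma part7:
  assumes X: "X \<in> Linf M" and Y: "Y \<in> Linf M"
    and H: "\<forall>V::real \<Rightarrow> real. mono V \<and> concave_on UNIV V \<longrightarrow>
          (\<integral>\<omega>. V (X \<omega>) \<partial>M) \<le> (\<integral>\<omega>. V (Y \<omega>) \<partial>M)"
  shows "acc_index M U X \<le> acc_index M U Y"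
proof (rule acc_le[OF P UF SAR X Y])
  fix g :: real assume g: "0 < g" "ereal g < acc_index M U X"
  have "U 0 \<le> (\<integral>\<omega>. U (g * X \<omega>) \<partial>M)" by (rule SS_mem[OF P UF SAR X g])
  also have "\<dots> \<le> (\<integral>\<omega>. U (g * Y \<omega>) \<partial>M)"
  proof -
    have "mono (\<lambda>t. U (g * t))" using g Umono by (auto simp: mono_def)
    moreover have "concave_on UNIV (\<lambda>t. U (g * t))"
      unfolding concave_on_iff
    proof (intro conjI ballI allI impI)
      fix x y u v :: real assume uv: "0 \<le> u" "0 \<le> v" "u + v = 1"
      have "(1 - v) * U (g * x) + v * U (g * y) \<le> U ((1 - v) * (g * x) + v * (g * y))"
        by (rule concU[OF Uconc]) (use uv in auto)
      moreover have u1: "u = 1 - v" using uv by simp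
      have "(1 - v) * (g * x) + v * (g * y) = g * (u *\<^sub>R x + v *\<^sub>R y)"
        unfolding u1 by (simp add: algebra_simps)
      moreover have "1 - v = u" using uv by simp
      ultimately show "u * U (g * x) + v * U (g * y) \<le> U (g * (u *\<^sub>R x + v *\<^sub>R y))" by simp
    qed simp
    ultimately show ?thesis using H by blast
  qed
  finally show "U 0 \<le> (\<integral>\<omega>. U (g * Y \<omega>) \<partial>M)" .
qed

lemma part3:
  assumes X: "X \<in> Linf M" and Y: "Y \<in> Linf M" and c: "0 \<le> c" "c \<le> 1"
  shows "min (acc_index M U X) (acc_index M U Y) \<le> acc_index M U (\<lambda>\<omega>. c * X \<omega> + (1 - c) * Y \<omega>)"
proof (rule acc_le[OF P UF SAR X Linf_lin[OF X Y]])
  fix g :: real assume g: "0 < g" "ereal g < min (acc_index M U X) (acc_index M U Y)"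
  have hX: "U 0 \<le> (\<integral>\<omega>. U (g * X \<omega>) \<partial>M)" by (rule SS_mem[OF P UF SAR X]) (use g in auto)
  have hY: "U 0 \<le> (\<integral>\<omega>. U (g * Y \<omega>) \<partial>M)" by (rule SS_mem[OF P UF SAR Y]) (use g in auto)
  have iX: "integrable M (\<lambda>\<omega>. U (g * X \<omega>))" by (rule G_integrable[OF P UF X])
  have iY: "integrable M (\<lambda>\<omega>. U (g * Y \<omega>))" by (rule G_integrable[OF P UF Y])
  have "U 0 = (1 - c) * U 0 + c * U 0" by (simp add: algebra_simps)
  also have "\<dots> \<le> (1 - c) * (\<integral>\<omega>. U (g * Y \<omega>) \<partial>M) + c * (\<integral>\<omega>. U (g * X \<omega>) \<partial>M)"
    using hX hY c by (intro add_mono mult_left_mono) auto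
  also have "\<dots> = (\<integral>\<omega>. (1 - c) * U (g * Y \<omega>) + c * U (g * X \<omega>) \<partial>M)"
    using iX iY by simp
  also have "\<dots> \<le> (\<integral>\<omega>. U (g * (c * X \<omega> + (1 - c) * Y \<omega>)) \<partial>M)"
  proof (rule integral_mono)
    show "integrable M (\<lambda>\<omega>. (1 - c) * U (g * Y \<omega>) + c * U (g * X \<omega>))" using iX iY by simp
    show "integrable M (\<lambda>\<omega>. U (g * (c * X \<omega> + (1 - c) * Y \<omega>)))"
      by (rule G_integrable[OF P UF Linf_lin[OF X Y]])
    fix \<omega>
    have "(1 - c) * U (g * Y \<omega>) + c * U (g * X \<omega>) \<le> U ((1 - c) * (g * Y \<omega>) + c * (g * X \<omega>))"
      by (rule concU[OF Uconc c])
    moreover have "(1 - c) * (g * Y \<omega>) + c * (g * X \<omega>) = g * (c * X \<omega> + (1 - c) * Y \<omega>)"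
      by (simp add: algebra_simps)
    ultimately show "(1 - c) * U (g * Y \<omega>) + c * U (g * X \<omega>) \<le> U (g * (c * X \<omega> + (1 - c) * Y \<omega>))"
      by simp
  qed
  finally show "U 0 \<le> (\<integral>\<omega>. U (g * (c * X \<omega> + (1 - c) * Y \<omega>)) \<partial>M)" .
qed

lemma part4:
  assumes X: "X \<in> Linf M" and Y: "Y \<in> Linf M" and d: "distr M borel X = distr M borel Y"
  shows "acc_index M U X = acc_index M U Y"
proof -
  have "(\<integral>\<omega>. U (g * X \<omega>) \<partial>M) = (\<integral>\<omega>. U (g * Y \<omega>) \<partial>M)" for g
  proof -
    have m: "(\<lambda>x. U (g * x)) \<in> borel_measurable borel" using uf_meas[OF UF] by measurable
    have "(\<integral>\<omega>. U (g * X \<omega>) \<partial>M) = (\<integral>x. U (g * x) \<partial>distr M borel X)"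
      using integral_distr[OF Linf_meas[OF X] m] by simp
    also have "\<dots> = (\<integral>x. U (g * x) \<partial>distr M borel Y)" using d by simp
    also have "\<dots> = (\<integral>\<omega>. U (g * Y \<omega>) \<partial>M)"
      using integral_distr[OF Linf_meas[OF Y] m] by simp
    finally show ?thesis .
  qed
  hence "SS M U X = SS M U Y" unfolding SS_def by simp
  thus ?thesis using acc_eq[OF P UF X] acc_eq[OF P UF Y] by simp
qed

end


context
  fixes M :: "'a measure" and U :: "real \<Rightarrow> real"
  assumes P: "prob_space M" and UF: "utility_function U" and SAR: "scale_aversion_regular M U"
begin

interpretation prob_space M by (rule P)

lemma part8:
  assumes X: "X \<in> Linf M" and c: "c > 0"
  shows "acc_index M U (\<lambda>\<omega>. c * X \<omega>) = ereal (1 / c) * acc_index M U X"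
proof (rule antisym)
  have cX: "(\<lambda>\<omega>. c * X \<omega>) \<in> Linf M" by (rule Linf_scale[OF X])
  show "acc_index M U (\<lambda>\<omega>. c * X \<omega>) \<le> ereal (1 / c) * acc_index M U X"
  proof (rule AI_le)
    fix g :: real assume g: "0 < g" "ereal g < acc_index M U (\<lambda>\<omega>. c * X \<omega>)"
    have "U 0 \<le> (\<integral>\<omega>. U (g * (c * X \<omega>)) \<partial>M)" by (rule SS_mem[OF P UF SAR cX g])
    hence "U 0 \<le> (\<integral>\<omega>. U ((g * c) * X \<omega>) \<partial>M)" by (simp add: mult.assoc)
    moreover have "0 < g * c" using g c by simp
    ultimately have "ereal (g * c) \<le> acc_index M U X" using acc_ge[OF P UF X] by blast
    hence "ereal (1 / c) * ereal (g * c) \<le> ereal (1 / c) * acc_index M U X"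
      by (rule ereal_mult_left_mono) (use c in simp)
    thus "ereal g \<le> ereal (1 / c) * acc_index M U X" using c by simp
  next
    show "0 \<le> ereal (1 / c) * acc_index M U X"
      using acc_nonneg[OF P UF X] c by simp
  qed
  show "ereal (1 / c) * acc_index M U X \<le> acc_index M U (\<lambda>\<omega>. c * X \<omega>)"
  proof (rule acc_le[OF P UF SAR X cX])
    fix g :: real assume g: "0 < g" "ereal g < ereal (1 / c) * acc_index M U X"
    have "ereal c * ereal g < ereal c * (ereal (1 / c) * acc_index M U X)"
      by (rule ereal_mult_strict_left_mono) (use g c in auto)
    also have "\<dots> = acc_index M U X"
      using c by (simp add: mult.assoc[symmetric])
    finally have "ereal (c * g) < acc_index M U X" by simp
    hence "U 0 \<le> (\<integral>\<omega>. U ((c * g) * X \<omega>) \<partial>M)"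
      by (intro SS_mem[OF P UF SAR X]) (use g c in auto)
    thus "U 0 \<le> (\<integral>\<omega>. U (g * (c * X \<omega>)) \<partial>M)" by (simp add: algebra_simps)
  qed
qed

lemma part5a:
  assumes X: "X \<in> Linf M" and neg: "(\<integral>\<omega>. X \<omega> \<partial>M) < 0"
  shows "acc_index M U X = 0"
proof -
  have "SS M U X = {}"
  proof (rule ccontr)
    assume "SS M U X \<noteq> {}"
    then obtain g where g: "g > 0" "U 0 \<le> (\<integral>\<omega>. U (g * X \<omega>) \<partial>M)" unfolding SS_def by auto
    obtain C where C: "AE \<omega> in M. \<bar>X \<omega>\<bar> \<le> C" using Linf_bound[OF X] by blast
    have iX: "integrable M X"
      by (rule integrable_const_bound[where B=C]) (use C Linf_meas[OF X] in auto)
    have igX: "integrable M (\<lambda>\<omega>. g * X \<omega>)" using iX by simp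
    have "convex_on UNIV (\<lambda>t. - U t)" using Uconc[OF P UF SAR] unfolding concave_on_def .
    hence "- U (expectation (\<lambda>\<omega>. g * X \<omega>)) \<le> expectation (\<lambda>\<omega>. - U (g * X \<omega>))"
      by (intro jensens_inequality[OF igX, where I=UNIV]) (auto intro: G_integrable[OF P UF X])
    hence "(\<integral>\<omega>. U (g * X \<omega>) \<partial>M) \<le> U (g * (\<integral>\<omega>. X \<omega> \<partial>M))" by simp
    also have "\<dots> < U 0"
    proof -
      have "g * (\<integral>\<omega>. X \<omega> \<partial>M) < 0" using g neg by (simp add: mult_pos_neg)
      thus ?thesis using UF unfolding utility_function_def strict_mono_def by blast
    qed
    finally show False using g by simp
  qed
  thus ?thesis using acc_eq[OF P UF X] by (simp add: AI_def)
qed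

lemma part2a:
  assumes X: "X \<in> Linf M" and pos: "AE \<omega> in M. X \<omega> \<ge> 0"
  shows "acc_index M U X = \<infinity>"
proof -
  have "\<infinity> \<le> acc_index M U X"
  proof (rule acc_le[OF P UF SAR X X])
    fix g :: real assume g: "0 < g" "ereal g < \<infinity>"
    have "(\<integral>\<omega>. U 0 \<partial>M) \<le> (\<integral>\<omega>. U (g * X \<omega>) \<partial>M)"
    proof (rule integral_mono_AE)
      show "AE \<omega> in M. U 0 \<le> U (g * X \<omega>)" using pos
      proof eventually_elim
        case (elim \<omega>) thus ?case using g Umono[OF P UF SAR] by (auto simp: mono_def)
      qed
    qed (auto intro: G_integrable[OF P UF X])
    thus "U 0 \<le> (\<integral>\<omega>. U (g * X \<omega>) \<partial>M)" by (simp add: prob_space)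
  qed
  thus ?thesis by simp
qed

end


context
  fixes M :: "'a measure" and U :: "real \<Rightarrow> real"
  assumes P: "prob_space M" and UF: "utility_function U" and SAR: "scale_aversion_regular M U"
begin

interpretation prob_space M by (rule P)

lemma part2b:
  assumes X: "X \<in> Linf M" and inf: "acc_index M U X = \<infinity>"
  shows "AE \<omega> in M. X \<omega> \<ge> 0"
proof (rule ccontr)
  assume nae: "\<not> (AE \<omega> in M. X \<omega> \<ge> 0)"
  have "\<exists>n. \<not> (AE \<omega> in M. X \<omega> \<ge> - inverse (real (Suc n)))"
  proof (rule ccontr)
    assume "\<not> (\<exists>n. \<not> (AE \<omega> in M. X \<omega> \<ge> - inverse (real (Suc n))))"
    hence "AE \<omega> in M. \<forall>n. X \<omega> \<ge> - inverse (real (Suc n))"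
      by (simp add: AE_all_countable)
    hence "AE \<omega> in M. X \<omega> \<ge> 0"
    proof eventually_elim
      case (elim \<omega>)
      show ?case
      proof (rule ccontr)
        assume "\<not> 0 \<le> X \<omega>"
        then obtain n where n: "n > 0" "inverse (real n) < - X \<omega>"
          using ex_inverse_of_nat_less[of "- X \<omega>"] by auto
        have "Suc (n - 1) = n" using n by simp
        with elim[rule_format, of "n - 1"] n show False by simp
      qed
    qed
    with nae show False by simp
  qed
  then obtain n where n: "\<not> (AE \<omega> in M. X \<omega> \<ge> - inverse (real (Suc n)))" by blast
  define e where "e = inverse (real (Suc n))"
  have e: "e > 0" by (simp add: e_def)
  define A where "A = {\<omega> \<in> space M. X \<omega> < - e}"
  have Xm: "X \<in> borel_measurable M" by (rule Linf_meas[OF X])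
  have Asets: "A \<in> sets M" unfolding A_def using Xm by measurable
  have seq: "{\<omega> \<in> space M. \<not> X \<omega> \<ge> - e} = A" unfolding A_def by auto
  have "emeasure M A \<noteq> 0"
    using n AE_iff_measurable[OF Asets seq] unfolding e_def by auto
  hence "measure M A \<noteq> 0" by (simp add: emeasure_eq_measure)
  hence p: "measure M A > 0" using measure_nonneg[of M A] by linarith
  define p where "p = measure M A"
  have p0: "p > 0" using p by (simp add: p_def)
  obtain B where B: "\<And>t. U t \<le> B" using UF unfolding utility_function_def bdd_above_def by auto
  obtain t where t: "U t < B - (B - U 0) / p" using uf_unbdd[OF UF] by blast
  define g where "g = max 1 (- t / e)"
  have g: "g > 0" "- t / e \<le> g" by (auto simp: g_def)
  have "U 0 \<le> (\<integral>\<omega>. U (g * X \<omega>) \<partial>M)"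
    by (rule SS_mem[OF P UF SAR X g(1)]) (simp add: inf)
  also have "\<dots> \<le> (\<integral>\<omega>. B + (U t - B) * indicator A \<omega> \<partial>M)"
  proof (rule integral_mono)
    show "integrable M (\<lambda>\<omega>. U (g * X \<omega>))" by (rule G_integrable[OF P UF X])
    show "integrable M (\<lambda>\<omega>. B + (U t - B) * indicator A \<omega>)"
      using Asets by (intro Bochner_Integration.integrable_add integrable_mult_right integrable_real_indicator) (auto simp: emeasure_eq_measure)
    fix \<omega> assume \<omega>: "\<omega> \<in> space M"
    show "U (g * X \<omega>) \<le> B + (U t - B) * indicator A \<omega>"
    proof (cases "\<omega> \<in> A")
      case True
      hence "X \<omega> < - e" by (simp add: A_def)
      hence "g * X \<omega> \<le> g * (- e)" using g by (intro mult_left_mono) auto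
      also have "g * (- e) \<le> t" using g(2) e by (simp add: field_simps)
      finally have "U (g * X \<omega>) \<le> U t" using Umono[OF P UF SAR] by (auto simp: mono_def)
      thus ?thesis using True by simp
    next
      case False thus ?thesis using B by simp
    qed
  qed
  also have "\<dots> = B + (U t - B) * p"
  proof -
    have iI: "integrable M (indicator A :: 'a \<Rightarrow> real)"
      using Asets by (intro integrable_real_indicator) (auto simp: emeasure_eq_measure)
    have "(\<integral>\<omega>. B + (U t - B) * indicator A \<omega> \<partial>M) = (\<integral>\<omega>. B \<partial>M) + (\<integral>\<omega>. (U t - B) * indicator A \<omega> \<partial>M)"
      using iI by (intro Bochner_Integration.integral_add) auto
    also have "\<dots> = B + (U t - B) * p"
      using Asets by (simp add: p_def prob_space emeasure_eq_measure)
    finally show ?thesis .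
  qed
  also have "\<dots> < U 0"
  proof -
    have "(U t - B) * p < (- (B - U 0) / p) * p"
      using t p0 by (intro mult_strict_right_mono) (auto simp: diff_divide_distrib)
    also have "\<dots> = - (B - U 0)" using p0 by simp
    finally show ?thesis by simp
  qed
  finally show False by simp
qed

end


context
  fixes M :: "'a measure" and U :: "real \<Rightarrow> real"
  assumes P: "prob_space M" and UF: "utility_function U" and SAR: "scale_aversion_regular M U"
begin

interpretation prob_space M by (rule P)

lemma part6:
  assumes X: "X \<in> Linf M" and Xs: "\<And>n. Xs n \<in> Linf M" and ge: "\<And>n. x \<le> acc_index M U (Xs n)"
    and lim: "AE \<omega> in M. (\<lambda>n. Xs n \<omega>) \<longlonglongrightarrow> X \<omega>"
  shows "x \<le> acc_index M U X"
proof (rule acc_le[OF P UF SAR X X])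
  fix g :: real assume g: "0 < g" "ereal g < x"
  have hn: "U 0 \<le> (\<integral>\<omega>. U (g * Xs n \<omega>) \<partial>M)" for n
    by (rule SS_mem[OF P UF SAR Xs g(1)]) (use g ge[of n] in auto)
  obtain C where C: "AE \<omega> in M. \<bar>X \<omega>\<bar> \<le> C" using Linf_bound[OF X] by blast
  obtain B where B: "\<And>t. U t \<le> B" using UF unfolding utility_function_def bdd_above_def by auto
  define L where "L = U (- (g * C))"
  define s where "s n \<omega> = max (U (g * Xs n \<omega>)) L" for n \<omega>
  define f where "f \<omega> = max (U (g * X \<omega>)) L" for \<omega>
  have Um: "U \<in> borel_measurable borel" by (rule uf_meas[OF UF])
  have fm: "f \<in> borel_measurable M" unfolding f_def using Um Linf_meas[OF X] by measurable
  have sm: "s n \<in> borel_measurable M" for n unfolding s_def using Um Linf_meas[OF Xs] by measurable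
  have bnd: "AE \<omega> in M. norm (s n \<omega>) \<le> \<bar>L\<bar> + \<bar>B\<bar>" for n
  proof (rule AE_I2)
    fix \<omega> show "norm (s n \<omega>) \<le> \<bar>L\<bar> + \<bar>B\<bar>"
      using B[of "g * Xs n \<omega>"] by (auto simp: s_def abs_le_iff max_def)
  qed
  have lims: "AE \<omega> in M. (\<lambda>n. s n \<omega>) \<longlonglongrightarrow> f \<omega>" using lim
  proof eventually_elim
    case (elim \<omega>)
    have "(\<lambda>n. g * Xs n \<omega>) \<longlonglongrightarrow> g * X \<omega>" by (intro tendsto_intros elim)
    hence "(\<lambda>n. U (g * Xs n \<omega>)) \<longlonglongrightarrow> U (g * X \<omega>)"
      by (rule isCont_tendsto_compose[OF uf_isCont[OF UF]])
    thus ?case unfolding s_def f_def by (intro tendsto_intros)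
  qed
  have conv: "(\<lambda>n. \<integral>\<omega>. s n \<omega> \<partial>M) \<longlonglongrightarrow> (\<integral>\<omega>. f \<omega> \<partial>M)"
    by (rule integral_dominated_convergence[OF fm sm _ lims bnd]) simp
  have si: "integrable M (s n)" for n
    by (rule integrable_dominated_convergence2[OF fm sm _ lims bnd]) simp
  have "U 0 \<le> (\<integral>\<omega>. s n \<omega> \<partial>M)" for n
  proof -
    have "(\<integral>\<omega>. U (g * Xs n \<omega>) \<partial>M) \<le> (\<integral>\<omega>. s n \<omega> \<partial>M)"
      by (rule integral_mono[OF G_integrable[OF P UF Xs] si]) (simp add: s_def)
    thus ?thesis using hn[of n] by simp
  qed
  hence "U 0 \<le> (\<integral>\<omega>. f \<omega> \<partial>M)" by (intro LIMSEQ_le_const[OF conv]) auto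
  also have "(\<integral>\<omega>. f \<omega> \<partial>M) = (\<integral>\<omega>. U (g * X \<omega>) \<partial>M)"
  proof (rule integral_cong_AE)
    show "AE \<omega> in M. f \<omega> = U (g * X \<omega>)" using C
    proof eventually_elim
      case (elim \<omega>)
      have "- (g * C) \<le> g * X \<omega>"
      proof -
        have "g * (- X \<omega>) \<le> g * C" using elim g by (intro mult_left_mono) (auto simp: abs_le_iff)
        thus ?thesis by simp
      qed
      hence "L \<le> U (g * X \<omega>)" using Umono[OF P UF SAR] unfolding L_def mono_def by blast
      thus ?case by (simp add: f_def)
    qed
    show "(\<lambda>\<omega>. U (g * X \<omega>)) \<in> borel_measurable M" using Um Linf_meas[OF X] by measurable
  qed (rule fm)
  finally show "U 0 \<le> (\<integral>\<omega>. U (g * X \<omega>) \<partial>M)" .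
qed

end


lemma chord:
  assumes c: "concave_on UNIV U" and h: "h > 0" and y: "\<bar>y\<bar> \<le> h"
  shows "U 0 + (U h - U 0) / h * max y 0 + (U (-h) - U 0) / (-h) * min y 0 \<le> U y"
proof (cases "y \<ge> 0")
  case True
  define s where "s = y / h"
  have s: "0 \<le> s" "s \<le> 1" using True y h by (auto simp: s_def field_simps)
  have "(1 - s) * U 0 + s * U h \<le> U ((1 - s) * 0 + s * h)" by (rule concU[OF c s])
  moreover have "(1 - s) * 0 + s * h = y" using h by (simp add: s_def)
  moreover have "(1 - s) * U 0 + s * U h = U 0 + (U h - U 0) / h * y"
    using h by (simp add: s_def field_simps)
  ultimately show ?thesis using True by simp
next
  case False
  define s where "s = - y / h"
  have s: "0 \<le> s" "s \<le> 1" using False y h by (auto simp: s_def field_simps)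
  have "(1 - s) * U 0 + s * U (-h) \<le> U ((1 - s) * 0 + s * (-h))" by (rule concU[OF c s])
  moreover have "(1 - s) * 0 + s * (-h) = y" using h by (simp add: s_def)
  moreover have "(1 - s) * U 0 + s * U (-h) = U 0 + (U (-h) - U 0) / (-h) * y"
    using h by (simp add: s_def field_simps)
  ultimately show ?thesis using False by simp
qed

context
  fixes M :: "'a measure" and U :: "real \<Rightarrow> real"
  assumes P: "prob_space M" and UF: "utility_function U" and SAR: "scale_aversion_regular M U"
begin

interpretation prob_space M by (rule P)

lemma part5b:
  assumes X: "X \<in> Linf M" and pos: "(\<integral>\<omega>. X \<omega> \<partial>M) > 0"
  shows "acc_index M U X > 0"
proof -
  obtain D where D: "(U has_real_derivative D) (at 0)"
    using UF unfolding utility_function_def by blast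
  have cU: "concave_on UNIV U" by (rule Uconc[OF P UF SAR])
  define a where "a h = (U h - U 0) / h" for h
  define b where "b h = (U (-h) - U 0) / (-h)" for h
  have la: "(a \<longlongrightarrow> D) (at_right 0)"
    using has_field_derivative_at_within[OF D, of "{0<..}"]
    unfolding has_field_derivative_iff a_def by simp
  have D2: "((\<lambda>x. U (- x)) has_real_derivative - D) (at 0)"
    using DERIV_mirror[where f=U and x=0 and y=D] D by simp
  have "((\<lambda>y. (U (- y) - U 0) / y) \<longlongrightarrow> - D) (at_right 0)"
    using has_field_derivative_at_within[OF D2, of "{0<..}"]
    unfolding has_field_derivative_iff by simp
  hence "((\<lambda>y. - ((U (- y) - U 0) / y)) \<longlongrightarrow> - (- D)) (at_right 0)"
    by (rule tendsto_minus)
  hence lb: "(b \<longlongrightarrow> D) (at_right 0)" unfolding b_def by simp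
  have Dpos: "D > 0"
  proof -
    have "U 1 - U 0 \<le> D"
    proof (rule tendsto_lowerbound[OF la])
      have "eventually (\<lambda>h. h \<in> {0<..<1}) (at_right (0::real))"
        by (rule eventually_at_right_real) simp
      thus "eventually (\<lambda>h. U 1 - U 0 \<le> a h) (at_right 0)"
        using eventually_at_right_less[of "0::real"]
      proof eventually_elim
        case (elim h)
        have "(1 - h) * U 0 + h * U 1 \<le> U ((1 - h) * 0 + h * 1)"
          by (rule concU[OF cU]) (use elim in auto)
        hence "h * (U 1 - U 0) \<le> U h - U 0" by (simp add: algebra_simps)
        thus ?case using elim by (simp add: a_def field_simps)
      qed
    qed simp
    moreover have "U 0 < U 1" using UF unfolding utility_function_def strict_mono_def by simp
    ultimately show ?thesis by simp
  qed
  obtain C where C: "C > 0" "AE \<omega> in M. \<bar>X \<omega>\<bar> \<le> C" using Linf_bound[OF X] by blast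
  have iX: "integrable M X"
    by (rule integrable_const_bound[where B=C]) (use C Linf_meas[OF X] in auto)
  define Pp where "Pp = (\<integral>\<omega>. max (X \<omega>) 0 \<partial>M)"
  define Nn where "Nn = (\<integral>\<omega>. min (X \<omega>) 0 \<partial>M)"
  have iP: "integrable M (\<lambda>\<omega>. max (X \<omega>) 0)" using iX by auto
  have iN: "integrable M (\<lambda>\<omega>. min (X \<omega>) 0)" using iX by auto
  have PN: "Pp + Nn = (\<integral>\<omega>. X \<omega> \<partial>M)"
  proof -
    have "Pp + Nn = (\<integral>\<omega>. max (X \<omega>) 0 + min (X \<omega>) 0 \<partial>M)"
      unfolding Pp_def Nn_def using iP iN by simp
    also have "\<dots> = (\<integral>\<omega>. X \<omega> \<partial>M)" by (rule Bochner_Integration.integral_cong) auto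
    finally show ?thesis .
  qed
  have "((\<lambda>h. a h * Pp + b h * Nn) \<longlongrightarrow> D * Pp + D * Nn) (at_right 0)"
    by (intro tendsto_intros la lb)
  moreover have "D * Pp + D * Nn > 0" using Dpos pos PN by (simp flip: distrib_left)
  ultimately have "eventually (\<lambda>h. a h * Pp + b h * Nn > 0) (at_right 0)"
    by (rule order_tendstoD)
  hence "eventually (\<lambda>h. 0 < h \<and> a h * Pp + b h * Nn > 0) (at_right (0::real))"
    using eventually_at_right_less[of "0::real"] by eventually_elim auto
  then obtain h where h: "0 < h" "a h * Pp + b h * Nn > 0"
    using eventually_happens'[of "at_right (0::real)"] trivial_limit_at_right_real by blast
  define g where "g = h / C"
  have g: "g > 0" using h C by (simp add: g_def)
  have iU: "integrable M (\<lambda>\<omega>. U (g * X \<omega>))" by (rule G_integrable[OF P UF X])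
  have "U 0 < U 0 + g * (a h * Pp + b h * Nn)" using g h by simp
  also have "U 0 + g * (a h * Pp + b h * Nn) =
      (\<integral>\<omega>. U 0 + (g * a h) * max (X \<omega>) 0 + (g * b h) * min (X \<omega>) 0 \<partial>M)"
    using iP iN by (simp add: Pp_def Nn_def prob_space algebra_simps)
  also have "\<dots> \<le> (\<integral>\<omega>. U (g * X \<omega>) \<partial>M)"
  proof (rule integral_mono_AE)
    show "integrable M (\<lambda>\<omega>. U 0 + (g * a h) * max (X \<omega>) 0 + (g * b h) * min (X \<omega>) 0)"
      using iP iN by simp
    show "integrable M (\<lambda>\<omega>. U (g * X \<omega>))" by (rule iU)
    show "AE \<omega> in M. U 0 + (g * a h) * max (X \<omega>) 0 + (g * b h) * min (X \<omega>) 0 \<le> U (g * X \<omega>)"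
      using C(2)
    proof eventually_elim
      case (elim \<omega>)
      have "\<bar>g * X \<omega>\<bar> \<le> g * C" using elim g by (simp add: abs_mult)
      also have "g * C = h" using C by (simp add: g_def)
      finally have yb: "\<bar>g * X \<omega>\<bar> \<le> h" .
      have "max (g * X \<omega>) 0 = g * max (X \<omega>) 0" "min (g * X \<omega>) 0 = g * min (X \<omega>) 0"
        using g by (auto simp: max_def min_def mult_le_0_iff)
      with chord[OF cU h(1) yb] show ?case by (simp add: a_def b_def algebra_simps)
    qed
  qed
  finally have "U 0 \<le> (\<integral>\<omega>. U (g * X \<omega>) \<partial>M)" by simp
  hence "ereal g \<le> acc_index M U X" by (rule acc_ge[OF P UF X g])
  thus ?thesis using g by (meson ereal_less(2) less_le_trans)
qed
end

theorem proposition3p2: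
  fixes M :: "'a measure" and U :: "real \<Rightarrow> real" and X Y :: "'a \<Rightarrow> real"
  assumes "prob_space M"
    and "utility_function U"
    and "scale_aversion_regular M U"
    and "X \<in> Linf M" and "Y \<in> Linf M"
  shows
    "((AE \<omega> in M. X \<omega> \<le> Y \<omega>) \<longrightarrow> acc_index M U X \<le> acc_index M U Y)
   \<and> ((AE \<omega> in M. X \<omega> \<ge> 0) \<longleftrightarrow> acc_index M U X = \<infinity>)
   \<and> (\<forall>c::real. 0 \<le> c \<and> c \<le> 1 \<longrightarrow>
        acc_index M U (\<lambda>\<omega>. c * X \<omega> + (1 - c) * Y \<omega>) \<ge> min (acc_index M U X) (acc_index M U Y))
   \<and> (distr M borel X = distr M borel Y \<longrightarrow> acc_index M U X = acc_index M U Y)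
   \<and> ((\<integral>\<omega>. X \<omega> \<partial>M) < 0 \<longrightarrow> acc_index M U X = 0)
   \<and> ((\<integral>\<omega>. X \<omega> \<partial>M) > 0 \<longrightarrow> acc_index M U X > 0)
   \<and> (\<forall>(x::ereal) (Xs::nat \<Rightarrow> 'a \<Rightarrow> real). x \<ge> 0 \<and> (\<forall>n. Xs n \<in> Linf M)
        \<and> (\<forall>n. acc_index M U (Xs n) \<ge> x)
        \<and> (AE \<omega> in M. (\<lambda>n. Xs n \<omega>) \<longlonglongrightarrow> X \<omega>)
        \<longrightarrow> acc_index M U X \<ge> x)
   \<and> ((\<forall>V::real \<Rightarrow> real. mono V \<and> concave_on UNIV V \<longrightarrow>
          (\<integral>\<omega>. V (X \<omega>) \<partial>M) \<le> (\<integral>\<omega>. V (Y \<omega>) \<partial>M))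
        \<longrightarrow> acc_index M U X \<le> acc_index M U Y)
   \<and> (\<forall>c::real. c > 0 \<longrightarrow>
        acc_index M U (\<lambda>\<omega>. c * X \<omega>) = ereal (1 / c) * acc_index M U X)"
proof (intro conjI allI impI iffI)
  note A = assms(1,2,3)
  show "acc_index M U X \<le> acc_index M U Y" if "AE \<omega> in M. X \<omega> \<le> Y \<omega>"
    by (rule part1[OF A assms(4,5) that])
  show "acc_index M U X = \<infinity>" if "AE \<omega> in M. X \<omega> \<ge> 0"
    by (rule part2a[OF A assms(4) that])
  show "AE \<omega> in M. X \<omega> \<ge> 0" if "acc_index M U X = \<infinity>"
    by (rule part2b[OF A assms(4) that])
  show "acc_index M U (\<lambda>\<omega>. c * X \<omega> + (1 - c) * Y \<omega>) \<ge> min (acc_index M U X) (acc_index M U Y)"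
    if "0 \<le> c \<and> c \<le> 1" for c
    using part3[OF A assms(4,5)] that by blast
  show "acc_index M U X = acc_index M U Y" if "distr M borel X = distr M borel Y"
    by (rule part4[OF A assms(4,5) that])
  show "acc_index M U X = 0" if "(\<integral>\<omega>. X \<omega> \<partial>M) < 0"
    by (rule part5a[OF A assms(4) that])
  show "acc_index M U X > 0" if "(\<integral>\<omega>. X \<omega> \<partial>M) > 0"
    by (rule part5b[OF A assms(4) that])
  show "acc_index M U X \<ge> x"
    if "x \<ge> 0 \<and> (\<forall>n. Xs n \<in> Linf M) \<and> (\<forall>n. acc_index M U (Xs n) \<ge> x)
        \<and> (AE \<omega> in M. (\<lambda>n. Xs n \<omega>) \<longlonglongrightarrow> X \<omega>)" for x Xs
    using part6[OF A assms(4), of Xs x] that by blast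
  show "acc_index M U X \<le> acc_index M U Y"
    if "\<forall>V::real \<Rightarrow> real. mono V \<and> concave_on UNIV V \<longrightarrow>
          (\<integral>\<omega>. V (X \<omega>) \<partial>M) \<le> (\<integral>\<omega>. V (Y \<omega>) \<partial>M)"
    by (rule part7[OF A assms(4,5) that])
  show "acc_index M U (\<lambda>\<omega>. c * X \<omega>) = ereal (1 / c) * acc_index M U X" if "c > 0" for c
    by (rule part8[OF A assms(4) that])
qed

end
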